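(* Let $H'=\begin{bmatrix}0\\1\\0\end{bmatrix}$ and $V'=\begin{bmatrix}0&1&0\end{bmatrix}$, and let $\mathcal{C}'=Av_{\mathfrak{P}}(H',V')$. A polyomino $P$ belongs to $\mathcal{C}'$ if and only if every maximal connected set of cells in a row (resp. in a column) of $P$ has a contact with the minimal bounding rectangle of $P$, i.e. contains a cell in the first or last column (resp. in the first or last row) of that rectangle.
   Context: A polyomino is a finite union of unit cells of $\mathbb{Z}\times\mathbb{Z}$ that is connected via edge adjacency, up to translation, identified with the binary matrix of its minimal bounding rectangle (entry $1$ iff the corresponding unit square is a cell). A matrix is a submatrix of another if obtained by deleting rows and/or columns; $Av_{\mathfrak{P}}(\mathcal{M})$ is the set of polyominoes with no submatrix in $\mathcal{M}$. *)

theory Defs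
  imports Main
begin

text \<open>A binary matrix: (number of rows, number of columns, entries).
  Only entries with row index < rows and column index < columns matter.\<close>
type_synonym bmat = "nat \<times> nat \<times> (nat \<Rightarrow> nat \<Rightarrow> bool)"

definition rows :: "bmat \<Rightarrow> nat" where "rows A = fst A"
definition cols :: "bmat \<Rightarrow> nat" where "cols A = fst (snd A)"
definition ent :: "bmat \<Rightarrow> nat \<Rightarrow> nat \<Rightarrow> bool" where "ent A = snd (snd A)"

definition cells :: "bmat \<Rightarrow> (nat \<times> nat) set" where
  "cells A = {(i, j). i < rows A \<and> j < cols A \<and> ent A i j}"

definition adjacent :: "nat \<times> nat \<Rightarrow> nat \<times> nat \<Rightarrow> bool" where
  "adjacent p q \<longleftrightarrow>
     (fst p = fst q \<and> (snd p + 1 = snd q \<or> snd q + 1 = snd p)) \<or>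
     (snd p = snd q \<and> (fst p + 1 = fst q \<or> fst q + 1 = fst p))"

text \<open>A polyomino, identified with the binary matrix of its minimal bounding rectangle:
  nonempty, edge-connected set of cells, and every row and every column of the
  rectangle contains a cell (minimality of the bounding rectangle).\<close>
definition is_polyomino :: "bmat \<Rightarrow> bool" where
  "is_polyomino P \<longleftrightarrow>
     cells P \<noteq> {} \<and>
     (\<forall>i < rows P. \<exists>j < cols P. ent P i j) \<and>
     (\<forall>j < cols P. \<exists>i < rows P. ent P i j) \<and>
     (\<forall>p \<in> cells P. \<forall>q \<in> cells P.
        (\<lambda>x y. x \<in> cells P \<and> y \<in> cells P \<and> adjacent x y)\<^sup>*\<^sup>* p q)"

definition submatrix :: "bmat \<Rightarrow> bmat \<Rightarrow> bool" where
  "submatrix Q A \<longleftrightarrow>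
     (\<exists>r c. strict_mono_on {..<rows Q} r \<and> (\<forall>i < rows Q. r i < rows A) \<and>
            strict_mono_on {..<cols Q} c \<and> (\<forall>j < cols Q. c j < cols A) \<and>
            (\<forall>i < rows Q. \<forall>j < cols Q. ent Q i j = ent A (r i) (c j)))"

definition AvP :: "bmat set \<Rightarrow> bmat set" where
  "AvP Ms = {P. is_polyomino P \<and> (\<forall>Q \<in> Ms. \<not> submatrix Q P)}"

definition H' :: bmat where "H' = (3, 1, \<lambda>i j. i = 1)"
definition V' :: bmat where "V' = (1, 3, \<lambda>i j. j = 1)"

definition row_segment :: "bmat \<Rightarrow> nat \<Rightarrow> nat \<Rightarrow> nat \<Rightarrow> bool" where
  "row_segment P i a b \<longleftrightarrow>
     i < rows P \<and> a \<le> b \<and> b < cols P \<and> (\<forall>j. a \<le> j \<and> j \<le> b \<longrightarrow> ent P i j) \<and>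
     (a = 0 \<or> \<not> ent P i (a - 1)) \<and> (b + 1 = cols P \<or> \<not> ent P i (b + 1))"

definition col_segment :: "bmat \<Rightarrow> nat \<Rightarrow> nat \<Rightarrow> nat \<Rightarrow> bool" where
  "col_segment P j a b \<longleftrightarrow>
     j < cols P \<and> a \<le> b \<and> b < rows P \<and> (\<forall>i. a \<le> i \<and> i \<le> b \<longrightarrow> ent P i j) \<and>
     (a = 0 \<or> \<not> ent P (a - 1) j) \<and> (b + 1 = rows P \<or> \<not> ent P (b + 1) j)"

end

theory Submission
  imports Defs
begin

lemma seg_down:
  fixes f :: "nat \<Rightarrow> bool"
  shows   "f m \<Longrightarrow> \<not> f l \<Longrightarrow> l < m \<Longrightarrow>
   \<exists>a. l < a \<and> a \<le> m \<and> (\<forall>k. a \<le> k \<and> k \<le> m \<longrightarrow> f k) \<and> \<not> f (a - 1)"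
proof (induction m)
  case 0 then show ?case by simp
next
  case (Suc m)
  show ?case
  proof (cases "l = m")
    case True then show ?thesis using Suc.prems by (intro exI[of _ "Suc m"]) (auto simp: le_Suc_eq)
  next
    case False
    hence lm: "l < m" using Suc.prems by simp
    show ?thesis
    proof (cases "f m")
      case True
      from Suc.IH[OF True Suc.prems(2) lm] obtain a where
        "l < a" "a \<le> m" "\<forall>k. a \<le> k \<and> k \<le> m \<longrightarrow> f k" "\<not> f (a - 1)" by blast
      then show ?thesis using Suc.prems by (intro exI[of _ a]) (auto simp: le_Suc_eq)
    next
      case False
      then show ?thesis using Suc.prems lm by (intro exI[of _ "Suc m"]) (auto simp: le_Suc_eq)
    qed
  qed
qed

lemma seg_up_aux:
  fixes f :: "nat \<Rightarrow> bool"
  shows   "f m \<Longrightarrow> \<not> f (m + Suc n) \<Longrightarrow>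
   \<exists>b. m \<le> b \<and> b < m + Suc n \<and> (\<forall>k. m \<le> k \<and> k \<le> b \<longrightarrow> f k) \<and> \<not> f (b + 1)"
proof (induction n arbitrary: m)
  case 0 then show ?case by (intro exI[of _ m]) auto
next
  case (Suc n)
  show ?case
  proof (cases "f (m+1)")
    case True
    have "\<not> f (m + 1 + Suc n)" using Suc.prems by simp
    from Suc.IH[OF True this] obtain b where
      "m + 1 \<le> b" "b < m + 1 + Suc n" "\<forall>k. m + 1 \<le> k \<and> k \<le> b \<longrightarrow> f k" "\<not> f (b + 1)" by blast
    then show ?thesis using Suc.prems
      by (intro exI[of _ b]) (auto, metis Suc_eq_plus1 le_antisym not_less_eq_eq)
  next
    case False
    then show ?thesis using Suc.prems by (intro exI[of _ m]) auto
  qed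
qed

lemma seg_up:
  fixes f :: "nat \<Rightarrow> bool"
  shows   "f m \<Longrightarrow> \<not> f u \<Longrightarrow> m < u \<Longrightarrow>
   \<exists>b. m \<le> b \<and> b < u \<and> (\<forall>k. m \<le> k \<and> k \<le> b \<longrightarrow> f k) \<and> \<not> f (b + 1)"
  using seg_up_aux[of f m "u - m - 1"] by simp

lemma seg_exists:
  fixes f :: "nat \<Rightarrow> bool"
  assumes "f m" "\<not> f l" "l < m" "\<not> f u" "m < u"
  shows "\<exists>a b. l < a \<and> a \<le> b \<and> b < u \<and> (\<forall>k. a \<le> k \<and> k \<le> b \<longrightarrow> f k) \<and> \<not> f (a - 1) \<and> \<not> f (b + 1)"
proof -
  obtain a where a: "l < a" "a \<le> m" "\<forall>k. a \<le> k \<and> k \<le> m \<longrightarrow> f k" "\<not> f (a - 1)"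
    using seg_down[OF assms(1-3)] by blast
  obtain b where b: "m \<le> b" "b < u" "\<forall>k. m \<le> k \<and> k \<le> b \<longrightarrow> f k" "\<not> f (b + 1)"
    using seg_up[OF assms(1,4,5)] by blast
  show ?thesis
    apply -
    apply (rule exI[of _ a], rule exI[of _ b])
    using a b by (metis le_trans nat_le_linear)
qed

lemma H'_iff:
  "submatrix H' P \<longleftrightarrow> (\<exists>j a b. col_segment P j a b \<and> a \<noteq> 0 \<and> b + 1 \<noteq> rows P)"
proof
  assume "submatrix H' P"
  then obtain r c :: "nat \<Rightarrow> nat" where r: "strict_mono_on {..<3} r" "\<forall>i<3. r i < rows P" "c 0 < cols P"
    and e: "\<forall>i<3. ent P (r i) (c 0) = (i = 1)"
    unfolding submatrix_def H'_def rows_def cols_def ent_def by auto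
  have o: "r 0 < r 1" "r 1 < r 2" using r(1) unfolding strict_mono_on_def by auto
  have e0: "\<not> ent P (r 0) (c 0)" and e1: "ent P (r 1) (c 0)" and e2: "\<not> ent P (r 2) (c 0)"
    using e by auto
  obtain a b where ab: "r 0 < a" "a \<le> b" "b < r 2" "\<forall>k. a \<le> k \<and> k \<le> b \<longrightarrow> ent P k (c 0)"
    "\<not> ent P (a - 1) (c 0)" "\<not> ent P (b + 1) (c 0)"
    using seg_exists[of "\<lambda>k. ent P k (c 0)", OF e1 e0 o(1) e2 o(2)] by blast
  have "r 2 < rows P" using r(2) by auto
  hence "col_segment P (c 0) a b" using ab r(3) unfolding col_segment_def by auto
  moreover have "a \<noteq> 0" "b + 1 \<noteq> rows P" using ab \<open>r 2 < rows P\<close> by auto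
  ultimately show "\<exists>j a b. col_segment P j a b \<and> a \<noteq> 0 \<and> b + 1 \<noteq> rows P" by blast
next
  assume "\<exists>j a b. col_segment P j a b \<and> a \<noteq> 0 \<and> b + 1 \<noteq> rows P"
  then obtain j a b where s: "col_segment P j a b" "a \<noteq> 0" "b + 1 \<noteq> rows P" by blast
  hence f: "j < cols P" "a \<le> b" "b + 1 < rows P" "ent P a j" "\<not> ent P (a - 1) j" "\<not> ent P (b + 1) j"
    unfolding col_segment_def by auto
  define r where "r = (\<lambda>i::nat. if i = 0 then a - 1 else if i = 1 then a else b + 1)"
  have "strict_mono_on {..<3} r" unfolding strict_mono_on_def r_def using f s(2) by auto
  moreover have "\<forall>i<3. r i < rows P" unfolding r_def using f by auto
  moreover have "\<forall>i<3. ent P (r i) ((\<lambda>_. j) 0) = (i = 1)"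
  proof (intro allI impI)
    fix i :: nat assume "i < 3"
    hence "i = 0 \<or> i = 1 \<or> i = 2" by auto
    then show "ent P (r i) ((\<lambda>_. j) 0) = (i = 1)" unfolding r_def using f by auto
  qed
  ultimately show "submatrix H' P"
    unfolding submatrix_def H'_def rows_def cols_def ent_def
    apply -
    apply (rule exI[of _ r], rule exI[of _ "\<lambda>_::nat. j"])
    using f(1) by (auto simp: strict_mono_on_def cols_def rows_def ent_def)
qed

lemma V'_iff:
  "submatrix V' P \<longleftrightarrow> (\<exists>i a b. row_segment P i a b \<and> a \<noteq> 0 \<and> b + 1 \<noteq> cols P)"
proof
  assume "submatrix V' P"
  then obtain r c :: "nat \<Rightarrow> nat" where r: "strict_mono_on {..<3} c" "\<forall>i<3. c i < cols P" "r 0 < rows P"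
    and e: "\<forall>i<3. ent P (r 0) (c i) = (i = 1)"
    unfolding submatrix_def V'_def rows_def cols_def ent_def by auto
  have o: "c 0 < c 1" "c 1 < c 2" using r(1) unfolding strict_mono_on_def by auto
  have e0: "\<not> ent P (r 0) (c 0)" and e1: "ent P (r 0) (c 1)" and e2: "\<not> ent P (r 0) (c 2)"
    using e by auto
  obtain a b where ab: "c 0 < a" "a \<le> b" "b < c 2" "\<forall>k. a \<le> k \<and> k \<le> b \<longrightarrow> ent P (r 0) k"
    "\<not> ent P (r 0) (a - 1)" "\<not> ent P (r 0) (b + 1)"
    using seg_exists[of "\<lambda>k. ent P (r 0) k", OF e1 e0 o(1) e2 o(2)] by blast
  have "c 2 < cols P" using r(2) by auto
  hence "row_segment P (r 0) a b" using ab r(3) unfolding row_segment_def by auto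
  moreover have "a \<noteq> 0" "b + 1 \<noteq> cols P" using ab \<open>c 2 < cols P\<close> by auto
  ultimately show "\<exists>i a b. row_segment P i a b \<and> a \<noteq> 0 \<and> b + 1 \<noteq> cols P" by blast
next
  assume "\<exists>i a b. row_segment P i a b \<and> a \<noteq> 0 \<and> b + 1 \<noteq> cols P"
  then obtain j a b where s: "row_segment P j a b" "a \<noteq> 0" "b + 1 \<noteq> cols P" by blast
  hence f: "j < rows P" "a \<le> b" "b + 1 < cols P" "ent P j a" "\<not> ent P j (a - 1)" "\<not> ent P j (b + 1)"
    unfolding row_segment_def by auto
  define c where "c = (\<lambda>i::nat. if i = 0 then a - 1 else if i = 1 then a else b + 1)"
  have "strict_mono_on {..<3} c" unfolding strict_mono_on_def c_def using f s(2) by auto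
  moreover have "\<forall>i<3. c i < cols P" unfolding c_def using f by auto
  moreover have "\<forall>i<3. ent P ((\<lambda>_. j) 0) (c i) = (i = 1)"
  proof (intro allI impI)
    fix i :: nat assume "i < 3"
    hence "i = 0 \<or> i = 1 \<or> i = 2" by auto
    then show "ent P ((\<lambda>_. j) 0) (c i) = (i = 1)" unfolding c_def using f by auto
  qed
  ultimately show "submatrix V' P"
    unfolding submatrix_def V'_def rows_def cols_def ent_def
    apply -
    apply (rule exI[of _ "\<lambda>_::nat. j"], rule exI[of _ c])
    using f(1) by (auto simp: strict_mono_on_def cols_def rows_def ent_def)
qed

theorem proposition18:
  assumes "is_polyomino P"
  shows "P \<in> AvP {H', V'} \<longleftrightarrow>
    (\<forall>i a b. row_segment P i a b \<longrightarrow> a = 0 \<or> b + 1 = cols P) \<and>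
    (\<forall>j a b. col_segment P j a b \<longrightarrow> a = 0 \<or> b + 1 = rows P)"
  using assms H'_iff[of P] V'_iff[of P] unfolding AvP_def by blast

end
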